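(* There exists a constant $C_{\rm lip}>0$, depending only on the shape-regularity of the family $\{\mathcal{T}_h\}_{h>0}$ and on $p$ (in particular independent of $h$ and of $\gamma_0$), such that for all $v_h,w_h,z_h\in\mathcal{V}_h$, $$|d_h(v_h;v_h,z_h)-d_h(w_h;w_h,z_h)|\le C_{\rm lip}\,\gamma_0\,h\,|v_h-w_h|_{1,\Omega}\,|z_h|_{1,\Omega}.$$
   Context: Let $\Omega\subset\mathbb{R}^2$ be an open bounded polygonal domain with Lipschitz boundary and $\{\mathcal{T}_h\}_{h>0}$ a shape-regular family of conforming triangulations of $\Omega$ into triangles $K$, $h_K=\mathrm{diam}(K)$, $h=\max_K h_K$, nodes $x_1,\dots,x_N$. $\mathcal{V}_h=\{\chi\in H^1(\Omega):\chi|_K\in\mathbb{P}_1(K)\ \forall K\}$. $\mathcal{E}_h$ is the set of interior edges; for $E\in\mathcal{E}_h$, $h_E=|E|$, $\mathbf t$ a fixed unit tangent vector on $E$ and $\partial_{\mathbf t}$ the tangential derivative. For a node $x_i$, $S_i=\{j\neq i: x_j\text{ shares an interior edge with }x_i\}$. For $w_h\in\mathcal{V}_h$, $\xi_{w_h}\in\mathcal{V}_h$ has nodal values $\xi_{w_h}(x_i)=\big|\sum_{j\in S_i}(w_h(x_i)-w_h(x_j))\big|\big/\sum_{j\in S_i}|w_h(x_i)-w_h(x_j)|$ if the denominator is nonzero and $0$ otherwise. Fix $p\in[1,\infty)$ and $\gamma_0>0$; $\alpha_E(w_h):=\max_{x\in E}[\xi_{w_h}(x)]^p$, and $$d_h(w_h;u_h,v_h)=\sum_{E\in\mathcal{E}_h}\gamma_0\,h_E^2\,\alpha_E(w_h)\int_E\partial_{\mathbf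 t}u_h\,\partial_{\mathbf t}v_h\,ds.$$ $|\cdot|_{1,\Omega}$ is the $H^1(\Omega)$ seminorm. *)

theory Defs
  imports "HOL-Analysis.Analysis"
begin

type_synonym pt = "real \<times> real"

definition rot90 :: "pt \<Rightarrow> pt" where
  "rot90 e = (- snd e, fst e)"

definition lipschitz_boundary :: "pt set \<Rightarrow> bool" where
  "lipschitz_boundary \<Omega> \<longleftrightarrow>
     (\<forall>x\<in>frontier \<Omega>. \<exists>r>0. \<exists>e::pt. norm e = 1 \<and>
        (\<exists>L (g::real \<Rightarrow> real). lipschitz_on L UNIV g \<and>
           (\<forall>y\<in>ball x r. y \<in> \<Omega> \<longleftrightarrow> y \<bullet> e > g (y \<bullet> rot90 e))))"

text \<open>A mesh element is given by its vertex set V (3 affinely independent points);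
  the triangle is K = convex hull V.\<close>
definition conforming_triangulation :: "pt set \<Rightarrow> pt set set \<Rightarrow> bool" where
  "conforming_triangulation \<Omega> T \<longleftrightarrow>
     finite T \<and> T \<noteq> {} \<and>
     (\<forall>V\<in>T. card V = 3 \<and> \<not> affine_dependent V) \<and>
     (\<Union>V\<in>T. convex hull V) = closure \<Omega> \<and>
     (\<forall>V\<in>T. \<forall>V'\<in>T. V \<noteq> V' \<longrightarrow> convex hull V \<inter> convex hull V' = convex hull (V \<inter> V'))"

definition inball_diam :: "pt set \<Rightarrow> real" where
  "inball_diam K = 2 * Sup {r. \<exists>c. cball c r \<subseteq> K}"

definition shape_regular :: "real \<Rightarrow> pt set set \<Rightarrow> bool" where
  "shape_regular \<sigma> T \<longleftrightarrow>
     (\<forall>V\<in>T. diameter (convex hull V) \<le> \<sigma> * inball_diam (convex hull V))"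

definition mesh_size :: "pt set set \<Rightarrow> real" where
  "mesh_size T = Max ((\<lambda>V. diameter (convex hull V)) ` T)"

definition mesh_nodes :: "pt set set \<Rightarrow> pt set" where
  "mesh_nodes T = \<Union>T"

definition P1_space :: "pt set set \<Rightarrow> (pt \<Rightarrow> real) set" where
  "P1_space T = {u. \<forall>V\<in>T. \<exists>c (g::pt). \<forall>x\<in>convex hull V. u x = c + g \<bullet> x}"

definition interior_edges :: "pt set \<Rightarrow> pt set set \<Rightarrow> pt set set" where
  "interior_edges \<Omega> T =
     {{a, b} | a b. a \<noteq> b \<and> (\<exists>V\<in>T. a \<in> V \<and> b \<in> V) \<and> open_segment a b \<subseteq> \<Omega>}"

definition edge_ends :: "pt set \<Rightarrow> pt \<times> pt" where
  "edge_ends E = (SOME ab. E = {fst ab, snd ab} \<and> fst ab \<noteq> snd ab)"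

definition edge_length :: "pt set \<Rightarrow> real" where
  "edge_length E = dist (fst (edge_ends E)) (snd (edge_ends E))"

definition edge_tangent :: "pt set \<Rightarrow> pt" where
  "edge_tangent E = (let (a, b) = edge_ends E in (1 / norm (b - a)) *\<^sub>R (b - a))"

definition tderiv :: "(pt \<Rightarrow> real) \<Rightarrow> pt \<Rightarrow> pt \<Rightarrow> real" where
  "tderiv u t x = vector_derivative (\<lambda>s. u (x + s *\<^sub>R t)) (at 0)"

definition edge_integral :: "pt set \<Rightarrow> (pt \<Rightarrow> real) \<Rightarrow> real" where
  "edge_integral E f = (let (a, b) = edge_ends E in
     dist a b * integral {0..1} (\<lambda>s. f (a + s *\<^sub>R (b - a))))"

definition neighbours :: "pt set \<Rightarrow> pt set set \<Rightarrow> pt \<Rightarrow> pt set" where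
  "neighbours \<Omega> T x = {y \<in> mesh_nodes T. y \<noteq> x \<and> {x, y} \<in> interior_edges \<Omega> T}"

definition xi_node :: "pt set \<Rightarrow> pt set set \<Rightarrow> (pt \<Rightarrow> real) \<Rightarrow> pt \<Rightarrow> real" where
  "xi_node \<Omega> T w x =
     (let S = neighbours \<Omega> T x;
          den = (\<Sum>y\<in>S. \<bar>w x - w y\<bar>)
      in if den \<noteq> 0 then \<bar>\<Sum>y\<in>S. (w x - w y)\<bar> / den else 0)"

text \<open>alpha_E(w) = max over x in E of xi_w(x)^p; on E the P1 function xi_w is the
  linear interpolant of its two endpoint nodal values.\<close>
definition alpha_edge :: "pt set \<Rightarrow> pt set set \<Rightarrow> real \<Rightarrow> (pt \<Rightarrow> real) \<Rightarrow> pt set \<Rightarrow> real" where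
  "alpha_edge \<Omega> T p w E = (let (a, b) = edge_ends E in
     Sup ((\<lambda>s. ((1 - s) * xi_node \<Omega> T w a + s * xi_node \<Omega> T w b) powr p) ` {0..1}))"

definition d_h :: "pt set \<Rightarrow> pt set set \<Rightarrow> real \<Rightarrow> real \<Rightarrow>
    (pt \<Rightarrow> real) \<Rightarrow> (pt \<Rightarrow> real) \<Rightarrow> (pt \<Rightarrow> real) \<Rightarrow> real" where
  "d_h \<Omega> T p \<gamma>\<^sub>0 w u v =
     (\<Sum>E\<in>interior_edges \<Omega> T.
        \<gamma>\<^sub>0 * (edge_length E)\<^sup>2 * alpha_edge \<Omega> T p w E *
        edge_integral E (\<lambda>x. tderiv u (edge_tangent E) x * tderiv v (edge_tangent E) x))"

text \<open>H^1 seminorm (gradient of a P1 function taken pointwise a.e.).\<close>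
definition H1_seminorm :: "pt set \<Rightarrow> (pt \<Rightarrow> real) \<Rightarrow> real" where
  "H1_seminorm \<Omega> u = sqrt (integral \<Omega> (\<lambda>x. (onorm (frechet_derivative u (at x)))\<^sup>2))"

end

theory Submission
  imports Defs
begin


lemma fiber_sum_le:
  fixes F :: "'b \<Rightarrow> real" and k :: real
  assumes "finite X" "finite Y" "f ` X \<subseteq> Y"
    "\<And>y. y\<in>Y \<Longrightarrow> real (card {x\<in>X. f x = y}) \<le> k" "\<And>y. y\<in>Y \<Longrightarrow> F y \<ge> 0"
  shows "(\<Sum>x\<in>X. F (f x)) \<le> k * (\<Sum>y\<in>Y. F y)"
proof -
  have "(\<Sum>x\<in>X. F (f x)) = (\<Sum>y\<in>Y. \<Sum>x\<in>{x\<in>X. f x = y}. F (f x))"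
    using sum.group[of X Y f "\<lambda>x. F (f x)"] assms by simp
  also have "\<dots> = (\<Sum>y\<in>Y. real (card {x\<in>X. f x = y}) * F y)"
    by (intro sum.cong) auto
  also have "\<dots> \<le> (\<Sum>y\<in>Y. k * F y)"
    by (intro sum_mono mult_right_mono) (auto simp: assms)
  finally show ?thesis by (simp add: sum_distrib_left)
qed

lemma cs_sqrt:
  fixes a b :: "'i \<Rightarrow> real"
  shows "(\<Sum>i\<in>I. a i * b i) \<le> sqrt (\<Sum>i\<in>I. (a i)\<^sup>2) * sqrt (\<Sum>i\<in>I. (b i)\<^sup>2)"
proof -
  have "(\<Sum>i\<in>I. a i * b i) \<le> sqrt ((\<Sum>i\<in>I. a i * b i)\<^sup>2)" by simp
  also have "\<dots> \<le> sqrt ((\<Sum>i\<in>I. (a i)\<^sup>2) * (\<Sum>i\<in>I. (b i)\<^sup>2))"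
    by (rule real_sqrt_le_mono[OF Cauchy_Schwarz_ineq_sum])
  finally show ?thesis by (simp add: real_sqrt_mult)
qed

lemma ratio_aux:
  fixes sx sy X Y D :: real
  assumes "0 \<le> sx" "sx \<le> X" "0 \<le> sy" "sy \<le> Y" "\<bar>X - Y\<bar> \<le> D" "\<bar>sx - sy\<bar> \<le> D" "0 < X" "0 < Y"
  shows "\<bar>sx / X - sy / Y\<bar> * Y \<le> 2 * D"
proof -
  have "\<bar>sx / X - sy / Y\<bar> * Y = \<bar>sx * Y - sy * X\<bar> / X"
  proof -
    have "sx / X - sy / Y = (sx * Y - sy * X) / (X * Y)" using assms by (simp add: field_simps)
    hence "\<bar>sx / X - sy / Y\<bar> = \<bar>sx * Y - sy * X\<bar> / (X * Y)" using assms by simp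
    thus ?thesis using assms by simp
  qed
  also have "sx * Y - sy * X = sx * (Y - X) + X * (sx - sy)" by algebra
  also have "\<bar>\<dots>\<bar> \<le> sx * D + X * D"
  proof -
    have "\<bar>sx * (Y - X)\<bar> \<le> sx * D" using assms by (simp add: abs_mult mult_left_mono abs_minus_commute)
    moreover have "\<bar>X * (sx - sy)\<bar> \<le> X * D" using assms by (simp add: abs_mult mult_left_mono)
    ultimately show ?thesis by (smt (verit))
  qed
  hence "\<bar>sx * (Y - X) + X * (sx - sy)\<bar> / X \<le> (sx * D + X * D) / X"
    using assms by (simp add: divide_right_mono)
  also have "\<dots> \<le> 2 * D"
  proof -
    have "D \<ge> 0" using assms by linarith
    hence "sx * D \<le> X * D" using assms by (simp add: mult_right_mono)
    thus ?thesis using assms by (simp add: field_simps)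
  qed
  finally show ?thesis .
qed

lemma ratio_lip:
  fixes x y :: "'a \<Rightarrow> real"
  assumes "finite S"
  shows "\<bar>(if (\<Sum>j\<in>S. \<bar>x j\<bar>) \<noteq> 0 then \<bar>\<Sum>j\<in>S. x j\<bar> / (\<Sum>j\<in>S. \<bar>x j\<bar>) else 0)
        - (if (\<Sum>j\<in>S. \<bar>y j\<bar>) \<noteq> 0 then \<bar>\<Sum>j\<in>S. y j\<bar> / (\<Sum>j\<in>S. \<bar>y j\<bar>) else 0)\<bar>
        * (\<Sum>j\<in>S. \<bar>y j\<bar>) \<le> 2 * (\<Sum>j\<in>S. \<bar>x j - y j\<bar>)"
proof -
  define X where "X = (\<Sum>j\<in>S. \<bar>x j\<bar>)"
  define Y where "Y = (\<Sum>j\<in>S. \<bar>y j\<bar>)"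
  define D where "D = (\<Sum>j\<in>S. \<bar>x j - y j\<bar>)"
  have X0: "X \<ge> 0" and Y0: "Y \<ge> 0" and D0: "D \<ge> 0" unfolding X_def Y_def D_def by (auto intro: sum_nonneg)
  have sx: "\<bar>\<Sum>j\<in>S. x j\<bar> \<le> X" unfolding X_def by (rule sum_abs)
  have sy: "\<bar>\<Sum>j\<in>S. y j\<bar> \<le> Y" unfolding Y_def by (rule sum_abs)
  have XY: "\<bar>X - Y\<bar> \<le> D"
  proof -
    have "\<bar>X - Y\<bar> = \<bar>\<Sum>j\<in>S. \<bar>x j\<bar> - \<bar>y j\<bar>\<bar>" unfolding X_def Y_def by (simp add: sum_subtractf)
    also have "\<dots> \<le> (\<Sum>j\<in>S. \<bar>\<bar>x j\<bar> - \<bar>y j\<bar>\<bar>)" by (rule sum_abs)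
    also have "\<dots> \<le> D" unfolding D_def by (intro sum_mono) linarith
    finally show ?thesis .
  qed
  have sxy: "\<bar>\<bar>\<Sum>j\<in>S. x j\<bar> - \<bar>\<Sum>j\<in>S. y j\<bar>\<bar> \<le> D"
  proof -
    have "\<bar>\<bar>\<Sum>j\<in>S. x j\<bar> - \<bar>\<Sum>j\<in>S. y j\<bar>\<bar> \<le> \<bar>(\<Sum>j\<in>S. x j) - (\<Sum>j\<in>S. y j)\<bar>" by linarith
    also have "\<dots> = \<bar>\<Sum>j\<in>S. x j - y j\<bar>" by (simp add: sum_subtractf)
    also have "\<dots> \<le> D" unfolding D_def by (rule sum_abs)
    finally show ?thesis .
  qed
  have "\<bar>(if X \<noteq> 0 then \<bar>\<Sum>j\<in>S. x j\<bar> / X else 0)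
        - (if Y \<noteq> 0 then \<bar>\<Sum>j\<in>S. y j\<bar> / Y else 0)\<bar> * Y \<le> 2 * D"
  proof (cases "Y = 0")
    case True thus ?thesis using D0 by simp
  next
    case Yn: False
    hence Yp: "Y > 0" using Y0 by simp
    show ?thesis
    proof (cases "X = 0")
      case True
      hence "\<bar>0 - \<bar>\<Sum>j\<in>S. y j\<bar> / Y\<bar> * Y = \<bar>\<Sum>j\<in>S. y j\<bar>" using Yp by simp
      also have "\<dots> \<le> Y" by (rule sy)
      also have "\<dots> \<le> X + D" using XY by linarith
      finally show ?thesis using True Yn D0 by simp
    next
      case False
      hence "X > 0" using X0 by simp
      thus ?thesis using ratio_aux[of "\<bar>\<Sum>j\<in>S. x j\<bar>" X "\<bar>\<Sum>j\<in>S. y j\<bar>" Y D] sx sy XY sxy Yp False Yn by simp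
    qed
  qed
  thus ?thesis unfolding X_def Y_def D_def .
qed

lemma powr_lip1:
  fixes x y p :: real
  assumes "0 \<le> y" "y \<le> x" "x \<le> 1" "p \<ge> 1"
  shows "x powr p - y powr p \<le> p * (x - y)"
proof (cases "y = 0")
  case True
  show ?thesis
  proof (cases "x = 0")
    case True thus ?thesis using \<open>y = 0\<close> by simp
  next
    case False
    hence "x > 0" using assms by simp
    hence "x powr p \<le> x" using powr_le_one_le[of x p] assms by simp
    also have "x \<le> p * x" using assms \<open>x > 0\<close> by simp
    finally show ?thesis using \<open>y = 0\<close> by simp
  qed
next
  case False
  hence yp: "y > 0" using assms by simp
  show ?thesis
  proof (cases "y = x")
    case True thus ?thesis by simp
  next
    case False
    hence "y < x" using assms by simp
    obtain z where z: "y < z" "z < x" "x powr p - y powr p = (x - y) * (p * z powr (p - 1))"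
      using MVT2[OF \<open>y < x\<close>, of "\<lambda>t. t powr p" "\<lambda>t. p * t powr (p - 1)"]
        has_real_derivative_powr yp by force
    have "z powr (p - 1) \<le> 1" using z assms yp by (intro powr_le1) auto
    hence "p * z powr (p - 1) \<le> p" using assms by simp
    hence "(x - y) * (p * z powr (p - 1)) \<le> (x - y) * p" using z by (intro mult_left_mono) auto
    thus ?thesis using z by (simp add: mult.commute)
  qed
qed

lemma powr_lip:
  fixes x y p :: real
  assumes "0 \<le> x" "x \<le> 1" "0 \<le> y" "y \<le> 1" "p \<ge> 1"
  shows "\<bar>x powr p - y powr p\<bar> \<le> p * \<bar>x - y\<bar>"
proof (cases "y \<le> x")
  case True thus ?thesis using powr_lip1[of y x p] assms
    by (smt (verit) powr_mono2)
next
  case False thus ?thesis using powr_lip1[of x y p] assms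
    by (smt (verit) powr_mono2)
qed

lemma sup_interp:
  fixes a b p :: real
  assumes "0 \<le> a" "0 \<le> b" "p \<ge> 1"
  shows "Sup ((\<lambda>s. ((1 - s) * a + s * b) powr p) ` {0..1}) = (max a b) powr p"
proof (rule cSup_eq_maximum)
  show "max a b powr p \<in> (\<lambda>s. ((1 - s) * a + s * b) powr p) ` {0..1}"
  proof (cases "a \<le> b")
    case True
    hence "max a b powr p = ((1 - 1) * a + 1 * b) powr p" by simp
    thus ?thesis by (intro image_eqI[where x=1]) auto
  next
    case False
    hence "max a b powr p = ((1 - 0) * a + 0 * b) powr p" by simp
    thus ?thesis by (intro image_eqI[where x=0]) auto
  qed
next
  fix y assume "y \<in> (\<lambda>s. ((1 - s) * a + s * b) powr p) ` {0..1}"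
  then obtain s where s: "0 \<le> s" "s \<le> 1" "y = ((1 - s) * a + s * b) powr p" by auto
  have "(1 - s) * a \<le> (1 - s) * max a b" using s by (intro mult_left_mono) auto
  moreover have "s * b \<le> s * max a b" using s by (intro mult_left_mono) auto
  ultimately have "(1 - s) * a + s * b \<le> max a b" by (simp add: algebra_simps)
  moreover have "0 \<le> (1 - s) * a + s * b" using s assms by simp
  ultimately show "y \<le> max a b powr p" using s assms by (simp add: powr_mono2)
qed

lemma max_powr_lip:
  fixes a b a' b' p :: real
  assumes "0 \<le> a" "a \<le> 1" "0 \<le> b" "b \<le> 1" "0 \<le> a'" "a' \<le> 1" "0 \<le> b'" "b' \<le> 1" "p \<ge> 1"
  shows "\<bar>max a b powr p - max a' b' powr p\<bar> \<le> p * (\<bar>a - a'\<bar> + \<bar>b - b'\<bar>)"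
proof -
  have "\<bar>max a b powr p - max a' b' powr p\<bar> \<le> p * \<bar>max a b - max a' b'\<bar>"
    using assms by (intro powr_lip) auto
  also have "\<dots> \<le> p * (\<bar>a - a'\<bar> + \<bar>b - b'\<bar>)"
    using assms by (intro mult_left_mono) auto
  finally show ?thesis .
qed




definition grad :: "(pt \<Rightarrow> real) \<Rightarrow> pt set \<Rightarrow> pt" where
  "grad f V = (SOME g. \<exists>c. \<forall>x\<in>convex hull V. f x = c + g \<bullet> x)"

lemma onorm_inner_eq: "onorm (\<lambda>h. g \<bullet> h) = norm (g::pt)"
proof (rule antisym)
  have "onorm (\<lambda>h. g \<bullet> h) \<le> norm g * onorm (\<lambda>h::pt. h)"
    using onorm_inner_right[of "\<lambda>h. h" g] by simp
  also have "\<dots> \<le> norm g" using onorm_id_le[where 'a=pt] by (simp add: mult_left_le)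
  finally show "onorm (\<lambda>h. g \<bullet> h) \<le> norm g" .
next
  show "norm g \<le> onorm (\<lambda>h. g \<bullet> h)"
  proof (cases "g = 0")
    case True thus ?thesis by (simp add: onorm_pos_le bounded_linear_inner_right)
  next
    case False
    have "norm (g \<bullet> g) / norm g \<le> onorm (\<lambda>h. g \<bullet> h)"
      using le_onorm[OF bounded_linear_inner_right[of g], of g] by simp
    moreover have "norm (g \<bullet> g) / norm g = norm g" using False
      by (simp add: power2_norm_eq_inner[symmetric] power2_eq_square)
    ultimately show ?thesis by simp
  qed
qed

locale mesh =
  fixes \<Omega> :: "pt set" and T :: "pt set set" and \<sigma> :: real
  assumes opn: "open \<Omega>" and lipb: "lipschitz_boundary \<Omega>"
    and ct: "conforming_triangulation \<Omega> T" and sr: "shape_regular \<sigma> T"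
begin

lemma finT: "finite T" using ct unfolding conforming_triangulation_def by blast

lemma card3: "V \<in> T \<Longrightarrow> card V = 3" using ct unfolding conforming_triangulation_def by auto

lemma finV: "V \<in> T \<Longrightarrow> finite V"
proof -
  assume "V \<in> T"
  hence "card V = 3" by (rule card3)
  thus "finite V" by (intro card_ge_0_finite) simp
qed

lemma cover: "(\<Union>V\<in>T. convex hull V) = closure \<Omega>" using ct unfolding conforming_triangulation_def by blast

lemma conf: "V \<in> T \<Longrightarrow> V' \<in> T \<Longrightarrow> V \<noteq> V' \<Longrightarrow> convex hull V \<inter> convex hull V' = convex hull (V \<inter> V')"
  using ct unfolding conforming_triangulation_def by blast

lemma K_compact: "V \<in> T \<Longrightarrow> compact (convex hull V)"
  using finV by (simp add: finite_imp_compact_convex_hull)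

lemma K_bounded: "V \<in> T \<Longrightarrow> bounded (convex hull V)"
  using K_compact compact_imp_bounded by blast

lemma K_closed: "V \<in> T \<Longrightarrow> closed (convex hull V)"
  using K_compact compact_imp_closed by blast

lemma diam_bound: "V \<in> T \<Longrightarrow> x \<in> convex hull V \<Longrightarrow> y \<in> convex hull V \<Longrightarrow> dist x y \<le> diameter (convex hull V)"
  using K_bounded diameter_bounded_bound by blast

lemma diam_pos: "V \<in> T \<Longrightarrow> diameter (convex hull V) > 0"
proof -
  assume V: "V \<in> T"
  have "card V = 3" using card3 V by blast
  then obtain a b c where "V = {a, b, c}" "a \<noteq> b" by (auto simp: card_3_iff)
  hence "a \<in> convex hull V" "b \<in> convex hull V" by (auto intro: hull_inc)
  hence "dist a b \<le> diameter (convex hull V)" using diam_bound V by blast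
  moreover have "dist a b > 0" using \<open>a \<noteq> b\<close> by simp
  ultimately show ?thesis by linarith
qed

lemma K_sub_closure: "V \<in> T \<Longrightarrow> convex hull V \<subseteq> closure \<Omega>" using cover by blast

lemma inball:
  assumes V: "V \<in> T"
  shows "\<exists>x r. r > 0 \<and> cball x r \<subseteq> convex hull V \<and> diameter (convex hull V) < 4 * \<sigma> * r"
proof -
  define K where "K = convex hull V"
  define A where "A = {r. \<exists>c. cball c r \<subseteq> K}"
  define R where "R = Sup A"
  have h0: "diameter K > 0" using diam_pos V K_def by simp
  have sre: "diameter K \<le> \<sigma> * (2 * R)" using sr V unfolding shape_regular_def inball_diam_def K_def R_def A_def by blast
  obtain c0 where c0: "c0 \<in> K"
  proof -
    have "card V = 3" using card3 V by blast
    then obtain a b c where "V = {a, b, c}" by (auto simp: card_3_iff)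
    hence "a \<in> K" unfolding K_def by (auto intro: hull_inc)
    thus ?thesis using that by blast
  qed
  have "0 \<in> A" unfolding A_def using c0 by (intro CollectI exI[of _ c0]) auto
  have bdd: "bdd_above A"
  proof (rule bdd_aboveI[where M = "diameter K"])
    fix r assume "r \<in> A"
    then obtain c where c: "cball c r \<subseteq> K" unfolding A_def by blast
    show "r \<le> diameter K"
    proof (cases "r \<ge> 0")
      case True
      have "c \<in> K" "c + (r, 0) \<in> K" using c True by (auto simp: dist_norm)
      hence "dist c (c + (r, 0)) \<le> diameter K" using diam_bound V K_def by blast
      thus ?thesis using True by (simp add: dist_norm)
    next
      case False thus ?thesis using h0 by simp
    qed
  qed
  have R0: "R \<ge> 0" unfolding R_def using \<open>0 \<in> A\<close> bdd by (simp add: cSup_upper)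
  have Rp: "R > 0" and sp: "\<sigma> > 0"
  proof -
    have "\<sigma> * (2 * R) > 0" using sre h0 by linarith
    thus "R > 0" "\<sigma> > 0" using R0 by (auto simp: zero_less_mult_iff)
  qed
  have "R / 2 < Sup A" using Rp R_def by simp
  then obtain r where r: "r \<in> A" "R / 2 < r" using less_cSup_iff[of A "R/2"] \<open>0 \<in> A\<close> bdd by blast
  then obtain c where c: "cball c r \<subseteq> K" unfolding A_def by blast
  have "diameter K < 4 * \<sigma> * r"
  proof -
    have "\<sigma> * (2 * R) < \<sigma> * (4 * r)" using r sp by (intro mult_strict_left_mono) auto
    moreover have "\<sigma> * (4 * r) = 4 * \<sigma> * r" by simp
    ultimately show ?thesis using sre by linarith
  qed
  moreover have "r > 0" using r Rp by simp
  ultimately show ?thesis using c unfolding K_def by blast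
qed

lemma sigma_pos: "T \<noteq> {} \<Longrightarrow> \<sigma> > 0"
proof -
  assume "T \<noteq> {}"
  then obtain V where V: "V \<in> T" by blast
  obtain x r where "r > 0" "diameter (convex hull V) < 4 * \<sigma> * r" using inball[OF V] by blast
  moreover have "diameter (convex hull V) > 0" using diam_pos V by blast
  ultimately have "4 * \<sigma> * r > 0" by linarith
  thus ?thesis using \<open>r > 0\<close> by (simp add: zero_less_mult_iff)
qed

lemma interior_disjoint:
  assumes V: "V \<in> T" and V': "V' \<in> T" and ne: "V \<noteq> V'"
  shows "interior (convex hull V) \<inter> interior (convex hull V') = {}"
proof -
  have "V \<inter> V' \<noteq> V"
  proof
    assume "V \<inter> V' = V"
    hence "V \<subseteq> V'" by blast
    moreover have "card V = card V'" using card3 V V' by simp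
    ultimately have "V = V'" using finV[OF V'] by (intro card_subset_eq) auto
    thus False using ne by blast
  qed
  then obtain v where v: "v \<in> V" "v \<notin> V'" by blast
  have "card (V - {v}) = 2" using card3[OF V] v finV[OF V] by simp
  then obtain a b where ab: "V - {v} = {a, b}" by (auto simp: card_2_iff)
  have "V \<inter> V' \<subseteq> {a, b}" using ab v by blast
  hence "convex hull (V \<inter> V') \<subseteq> closed_segment a b"
    by (simp add: hull_mono segment_convex_hull)
  hence "interior (convex hull (V \<inter> V')) = {}"
  proof -
    have "interior (closed_segment a b) = {}" by (simp add: interior_closed_segment)
    thus ?thesis using interior_mono[OF \<open>convex hull (V \<inter> V') \<subseteq> closed_segment a b\<close>] by blast
  qed
  thus ?thesis using conf[OF V V' ne] interior_Int by metis
qed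

lemma interior_sub_Omega:
  assumes V: "V \<in> T"
  shows "interior (convex hull V) \<subseteq> \<Omega>"
proof
  fix x assume x: "x \<in> interior (convex hull V)"
  show "x \<in> \<Omega>"
  proof (rule ccontr)
    assume nx: "x \<notin> \<Omega>"
    have "x \<in> closure \<Omega>" using x interior_subset K_sub_closure[OF V] by blast
    hence xf: "x \<in> frontier \<Omega>" using nx opn by (simp add: frontier_def interior_open)
    obtain r e L g where r: "r > 0" and e: "norm e = 1" and g: "lipschitz_on L UNIV g"
      and iff: "\<forall>y\<in>ball x r. y \<in> \<Omega> \<longleftrightarrow> y \<bullet> e > g (y \<bullet> rot90 e)"
      using lipb xf unfolding lipschitz_boundary_def by blast
    have gc: "continuous_on UNIV g" using g lipschitz_on_continuous_on by blast
    obtain \<epsilon> where eps: "\<epsilon> > 0" "ball x \<epsilon> \<subseteq> convex hull V"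
      using x by (meson mem_interior)
    define \<delta> where "\<delta> = min r \<epsilon> / 2"
    have dp: "\<delta> > 0" "\<delta> < r" "\<delta> < \<epsilon>" using r eps unfolding \<delta>_def by auto
    define y where "y = x - \<delta> *\<^sub>R e"
    have dy: "dist x y = \<delta>" unfolding y_def using e dp by (simp add: dist_norm)
    have erot: "e \<bullet> rot90 e = 0" by (cases e) (simp add: rot90_def algebra_simps)
    have gx: "\<not> x \<bullet> e > g (x \<bullet> rot90 e)" using iff nx r by simp
    have "y \<bullet> rot90 e = x \<bullet> rot90 e" unfolding y_def by (simp add: inner_diff_left erot)
    moreover have "y \<bullet> e = x \<bullet> e - \<delta>" unfolding y_def using e by (simp add: inner_diff_left dot_square_norm)
    ultimately have ylt: "y \<bullet> e < g (y \<bullet> rot90 e)" using gx dp by simp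
    define U where "U = ball x r \<inter> {z. z \<bullet> e < g (z \<bullet> rot90 e)}"
    have "open {z. z \<bullet> e < g (z \<bullet> rot90 e)}"
      by (intro open_Collect_less continuous_intros continuous_on_compose2[OF gc]) auto
    hence oU: "open U" unfolding U_def by blast
    have yU: "y \<in> U" unfolding U_def using dy dp ylt by simp
    have "U \<inter> \<Omega> = {}" unfolding U_def using iff by auto
    moreover have "y \<in> closure \<Omega>" using dy dp eps K_sub_closure[OF V] by auto
    ultimately show False using oU yU closure_iff_nhds_not_empty by blast
  qed
qed

definition kappa :: real where "kappa = measure lborel (ball (0::pt) 1)"

lemma kappa_pos: "kappa > 0" unfolding kappa_def by (rule content_ball_pos) simp

lemma content_ball2: "r \<ge> 0 \<Longrightarrow> measure lborel (ball (c::pt) r) = r\<^sup>2 * kappa"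
  unfolding kappa_def using content_ball_conv_unit_ball[of r c] by (simp add: power2_eq_square)

lemma valence_tri: "real (card {V\<in>T. c \<in> V}) \<le> 16 * \<sigma>\<^sup>2"
proof (cases "{V\<in>T. c \<in> V} = {}")
  case True
  have "real (card {V\<in>T. c \<in> V}) = 0" by (subst True) simp
  thus ?thesis by simp
next
  case False
  define TC where "TC = {V\<in>T. c \<in> V}"
  have fTC: "finite TC" unfolding TC_def using finT by simp
  have neTC: "TC \<noteq> {}" using False TC_def by simp
  have sp: "\<sigma> > 0" using sigma_pos neTC TC_def by blast
  define \<rho> where "\<rho> = Min ((\<lambda>V. diameter (convex hull V)) ` TC)"
  have \<rho>le: "\<And>V. V \<in> TC \<Longrightarrow> \<rho> \<le> diameter (convex hull V)" unfolding \<rho>_def using fTC by simp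
  have \<rho>p: "\<rho> > 0" unfolding \<rho>_def using fTC neTC diam_pos TC_def by simp
  have "\<forall>V\<in>TC. \<exists>xr. snd xr > 0 \<and> cball (fst xr) (snd xr) \<subseteq> convex hull V \<and> diameter (convex hull V) < 4 * \<sigma> * snd xr"
    using inball TC_def by fastforce
  then obtain F where F: "\<And>V. V \<in> TC \<Longrightarrow> snd (F V) > 0 \<and> cball (fst (F V)) (snd (F V)) \<subseteq> convex hull V \<and> diameter (convex hull V) < 4 * \<sigma> * snd (F V)"
    using bchoice by metis
  define s where "s = \<rho> / (4 * \<sigma>)"
  have s_pos: "s > 0" unfolding s_def using \<rho>p sp by simp
  define y where "y V = c + (\<rho> / diameter (convex hull V)) *\<^sub>R (fst (F V) - c)" for V
  have ball_in: "ball (y V) s \<subseteq> interior (convex hull V) \<and> ball (y V) s \<subseteq> cball c \<rho>" if V: "V \<in> TC" for V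
  proof -
    define K where "K = convex hull V"
    define h where "h = diameter K"
    define lam where "lam = \<rho> / h"
    define x0 where "x0 = fst (F V)"
    define r where "r = snd (F V)"
    have VT: "V \<in> T" and cV: "c \<in> V" using V TC_def by auto
    have hp: "h > 0" unfolding h_def K_def using diam_pos VT by simp
    have lamp: "lam > 0" unfolding lam_def using \<rho>p hp by simp
    have lam1: "lam \<le> 1" unfolding lam_def using \<rho>le[OF V] hp h_def K_def by simp
    have rp: "r > 0" and cb: "cball x0 r \<subseteq> K" and hr: "h < 4 * \<sigma> * r"
      using F[OF V] unfolding r_def x0_def h_def K_def by auto
    have cK: "c \<in> K" unfolding K_def using cV by (rule hull_inc)
    have cvx: "convex K" unfolding K_def by simp
    have yV: "y V = c + lam *\<^sub>R (x0 - c)" unfolding y_def lam_def h_def K_def x0_def by simp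
    have sl: "s / lam < r"
    proof -
      have "s / lam = h / (4 * \<sigma>)" unfolding s_def lam_def using \<rho>p hp sp by (simp add: field_simps)
      also have "\<dots> < r" using hr sp by (simp add: field_simps)
      finally show ?thesis .
    qed
    have sub: "z \<in> K \<and> dist c z \<le> \<rho>" if z: "dist (y V) z < s" for z
    proof -
      define x' where "x' = c + (1 / lam) *\<^sub>R (z - c)"
      have "x' - x0 = (1 / lam) *\<^sub>R (z - y V)"
        unfolding x'_def yV using lamp by (simp add: algebra_simps)
      hence "norm (x' - x0) = norm (z - y V) / lam" using lamp by simp
      also have "\<dots> < s / lam" using z lamp by (simp add: dist_norm norm_minus_commute divide_strict_right_mono)
      finally have "dist x0 x' \<le> r" using sl by (simp add: dist_norm norm_minus_commute)
      hence x'K: "x' \<in> K" using cb by auto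
      have zeq: "z = (1 - lam) *\<^sub>R c + lam *\<^sub>R x'"
        unfolding x'_def using lamp by (simp add: algebra_simps)
      have "z \<in> K" unfolding zeq using convexD[OF cvx cK x'K] lamp lam1 by simp
      moreover have "dist c z \<le> \<rho>"
      proof -
        have "z - c = lam *\<^sub>R (x' - c)" unfolding x'_def using lamp by simp
        have "dist c z = norm (z - c)" by (simp add: dist_norm norm_minus_commute)
        also have "\<dots> = lam * norm (x' - c)" using \<open>z - c = lam *\<^sub>R (x' - c)\<close> lamp by simp
        also have "\<dots> = lam * dist c x'" by (simp add: dist_norm norm_minus_commute)
        finally have "dist c z = lam * dist c x'" .
        also have "\<dots> \<le> lam * h" using diam_bound[OF VT] cK x'K lamp unfolding h_def K_def by (intro mult_left_mono) auto
        also have "\<dots> = \<rho>" unfolding lam_def using hp by simp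
        finally show ?thesis .
      qed
      ultimately show ?thesis by blast
    qed
    have "ball (y V) s \<subseteq> K" using sub by auto
    hence "ball (y V) s \<subseteq> interior K" by (simp add: interior_maximal)
    moreover have "ball (y V) s \<subseteq> cball c \<rho>" using sub by auto
    ultimately show ?thesis unfolding K_def by blast
  qed
  have disj: "disjoint_family_on (\<lambda>V. ball (y V) s) TC"
    unfolding disjoint_family_on_def
  proof (intro ballI impI)
    fix V V' assume "V \<in> TC" "V' \<in> TC" "V \<noteq> V'"
    thus "ball (y V) s \<inter> ball (y V') s = {}"
      using ball_in interior_disjoint[of V V'] TC_def by blast
  qed
  have "(\<Sum>V\<in>TC. measure lborel (ball (y V) s)) = measure lborel (\<Union>V\<in>TC. ball (y V) s)"
    apply (rule measure_finite_Union[symmetric, OF fTC _ disj])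
     apply auto[1]
    using emeasure_lborel_ball_finite by (metis order.strict_implies_not_eq)
  also have "\<dots> \<le> measure lborel (cball c \<rho>)"
  proof (rule measure_mono_fmeasurable)
    show "(\<Union>V\<in>TC. ball (y V) s) \<subseteq> cball c \<rho>" using ball_in by blast
    show "(\<Union>V\<in>TC. ball (y V) s) \<in> sets lborel" using fTC by auto
    show "cball c \<rho> \<in> fmeasurable lborel"
      unfolding fmeasurable_def using emeasure_bounded_finite[OF bounded_cball[of c \<rho>]] by simp
  qed
  also have "\<dots> = \<rho>\<^sup>2 * kappa" using content_ball2 \<rho>p by (simp add: content_cball_conv_ball)
  finally have "real (card TC) * (s\<^sup>2 * kappa) \<le> \<rho>\<^sup>2 * kappa"
    using content_ball2 s_pos by simp
  hence "real (card TC) * s\<^sup>2 \<le> \<rho>\<^sup>2" using kappa_pos by (simp add: mult.assoc[symmetric])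
  moreover have "\<rho>\<^sup>2 = 16 * \<sigma>\<^sup>2 * s\<^sup>2" unfolding s_def using sp by (simp add: field_simps power2_eq_square)
  ultimately have "real (card TC) * s\<^sup>2 \<le> (16 * \<sigma>\<^sup>2) * s\<^sup>2" by simp
  hence "real (card TC) \<le> 16 * \<sigma>\<^sup>2" using s_pos by (simp add: mult_le_cancel_right)
  thus ?thesis unfolding TC_def .
qed

lemma grad_rep: "f \<in> P1_space T \<Longrightarrow> V \<in> T \<Longrightarrow> \<exists>c. \<forall>x\<in>convex hull V. f x = c + grad f V \<bullet> x"
  unfolding P1_space_def grad_def by (rule someI_ex) blast

lemma grad_diff: "f \<in> P1_space T \<Longrightarrow> V \<in> T \<Longrightarrow> a \<in> convex hull V \<Longrightarrow> b \<in> convex hull V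
   \<Longrightarrow> f b - f a = grad f V \<bullet> (b - a)"
  using grad_rep[of f V] by (auto simp: inner_diff_right)

lemma P1_diff: "v \<in> P1_space T \<Longrightarrow> w \<in> P1_space T \<Longrightarrow> (\<lambda>x. v x - w x) \<in> P1_space T"
  unfolding P1_space_def
proof (intro CollectI ballI)
  fix V assume v: "v \<in> {u. \<forall>V\<in>T. \<exists>c g. \<forall>x\<in>convex hull V. u x = c + g \<bullet> x}"
    and w: "w \<in> {u. \<forall>V\<in>T. \<exists>c g. \<forall>x\<in>convex hull V. u x = c + g \<bullet> x}" and V: "V \<in> T"
  obtain c1 g1 where 1: "\<forall>x\<in>convex hull V. v x = c1 + g1 \<bullet> x" using v V by blast
  obtain c2 g2 where 2: "\<forall>x\<in>convex hull V. w x = c2 + g2 \<bullet> x" using w V by blast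
  show "\<exists>c g. \<forall>x\<in>convex hull V. v x - w x = c + g \<bullet> x"
    using 1 2 by (intro exI[of _ "c1 - c2"] exI[of _ "g1 - g2"]) (auto simp: inner_diff_left)
qed

lemma deriv_int:
  assumes f: "f \<in> P1_space T" and V: "V \<in> T" and x: "x \<in> interior (convex hull V)"
  shows "frechet_derivative f (at x) = (\<lambda>h. grad f V \<bullet> h)"
proof -
  obtain c where c: "\<forall>y\<in>convex hull V. f y = c + grad f V \<bullet> y" using grad_rep[OF f V] by blast
  have "((\<lambda>y. c + grad f V \<bullet> y) has_derivative (\<lambda>h. grad f V \<bullet> h)) (at x)"
    by (auto intro!: derivative_eq_intros)
  hence "(f has_derivative (\<lambda>h. grad f V \<bullet> h)) (at x)"
    by (rule has_derivative_transform_within_open[OF _ open_interior x]) (use c interior_subset in \<open>metis subsetD\<close>)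
  thus ?thesis by (rule frechet_derivative_at[symmetric])
qed

lemma H1_formula:
  assumes f: "f \<in> P1_space T"
  shows "(H1_seminorm \<Omega> f)\<^sup>2 = (\<Sum>V\<in>T. (norm (grad f V))\<^sup>2 * measure lborel (interior (convex hull V)))"
proof -
  define F where "F x = (onorm (frechet_derivative f (at x)))\<^sup>2" for x
  define G where "G x = (\<Sum>V\<in>T. (if x \<in> interior (convex hull V) then (norm (grad f V))\<^sup>2 else 0))" for x
  define N where "N = (\<Union>V\<in>T. frontier (convex hull V))"
  define I where "I = (\<Sum>V\<in>T. (norm (grad f V))\<^sup>2 * measure lborel (interior (convex hull V)))"
  have negN: "negligible N" unfolding N_def using finT
    by (intro negligible_Union) (auto intro: negligible_convex_frontier)
  have FG: "G x = F x" if x: "x \<in> \<Omega> - N" for x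
  proof -
    have "x \<in> closure \<Omega>" using x closure_subset by blast
    then obtain W where W: "W \<in> T" "x \<in> convex hull W" using cover by blast
    have "x \<notin> frontier (convex hull W)" using x W N_def by blast
    hence xi: "x \<in> interior (convex hull W)" using W K_closed[OF W(1)]
      by (simp add: frontier_def closure_closed)
    have "F x = (norm (grad f W))\<^sup>2" unfolding F_def deriv_int[OF f W(1) xi] onorm_inner_eq ..
    moreover have "G x = (norm (grad f W))\<^sup>2"
    proof -
      have "G x = (\<Sum>V\<in>T. (if V = W then (norm (grad f V))\<^sup>2 else 0))"
        unfolding G_def
      proof (intro sum.cong refl)
        fix V assume V: "V \<in> T"
        show "(if x \<in> interior (convex hull V) then (norm (grad f V))\<^sup>2 else 0) = (if V = W then (norm (grad f V))\<^sup>2 else 0)"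
          using interior_disjoint[OF V W(1)] xi by auto
      qed
      also have "\<dots> = (norm (grad f W))\<^sup>2" using W(1) finT by (simp add: sum.delta')
      finally show ?thesis .
    qed
    ultimately show ?thesis by simp
  qed
  have Gint: "(G has_integral I) \<Omega>"
    unfolding G_def I_def
  proof (rule has_integral_sum[OF finT])
    fix V assume V: "V \<in> T"
    define A where "A = interior (convex hull V)"
    have bA: "bounded A" unfolding A_def using K_bounded[OF V] by (simp add: bounded_interior)
    have "((\<lambda>x. 1) has_integral measure lborel A) A"
    proof (rule has_integral_measure_lborel)
      show "A \<in> sets borel" unfolding A_def by simp
      show "emeasure lborel A < \<infinity>" using emeasure_bounded_finite[OF bA] .
    qed
    hence "((\<lambda>x. (norm (grad f V))\<^sup>2 * 1) has_integral (norm (grad f V))\<^sup>2 * measure lborel A) A"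
      by (rule has_integral_mult_right)
    hence "((\<lambda>x. if x \<in> A then (norm (grad f V))\<^sup>2 else 0) has_integral (norm (grad f V))\<^sup>2 * measure lborel A) \<Omega>"
      using has_integral_restrict[of A \<Omega>] interior_sub_Omega[OF V] A_def by simp
    thus "((\<lambda>x. if x \<in> interior (convex hull V) then (norm (grad f V))\<^sup>2 else 0) has_integral
          (norm (grad f V))\<^sup>2 * measure lborel (interior (convex hull V))) \<Omega>" unfolding A_def .
  qed
  have "(F has_integral I) \<Omega>"
    by (rule has_integral_spike[OF negN _ Gint]) (use FG in auto)
  hence "integral \<Omega> F = I" by (rule integral_unique)
  moreover have "I \<ge> 0" unfolding I_def by (intro sum_nonneg mult_nonneg_nonneg) auto
  ultimately show ?thesis unfolding H1_seminorm_def F_def[symmetric] I_def by simp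
qed

end



definition ea :: "pt set \<Rightarrow> pt" where "ea E = fst (edge_ends E)"
definition eb :: "pt set \<Rightarrow> pt" where "eb E = snd (edge_ends E)"
definition dlt :: "(pt \<Rightarrow> real) \<Rightarrow> pt set \<Rightarrow> real" where "dlt f E = f (eb E) - f (ea E)"

context mesh begin

abbreviation "IE \<equiv> interior_edges \<Omega> T"

lemma edge_props:
  assumes "E \<in> IE"
  shows "ea E \<noteq> eb E \<and> E = {ea E, eb E} \<and> (\<exists>V\<in>T. ea E \<in> V \<and> eb E \<in> V) \<and> open_segment (ea E) (eb E) \<subseteq> \<Omega>"
proof -
  obtain a b where ab: "E = {a, b}" "a \<noteq> b" "\<exists>V\<in>T. a \<in> V \<and> b \<in> V" "open_segment a b \<subseteq> \<Omega>"
    using assms unfolding interior_edges_def by blast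
  have "\<exists>ab. E = {fst ab, snd ab} \<and> fst ab \<noteq> snd ab" using ab by (intro exI[of _ "(a, b)"]) simp
  hence ee: "E = {ea E, eb E}" "ea E \<noteq> eb E" unfolding ea_def eb_def edge_ends_def by (metis (mono_tags, lifting) someI_ex)+
  hence "(ea E = a \<and> eb E = b) \<or> (ea E = b \<and> eb E = a)" using ab by (auto simp: doubleton_eq_iff)
  thus ?thesis using ab ee by (auto simp: open_segment_commute)
qed

lemma finIE: "finite IE"
proof (rule finite_subset)
  show "IE \<subseteq> Pow (\<Union>T)" unfolding interior_edges_def by auto
  show "finite (Pow (\<Union>T))" using finT finV by auto
qed

definition VE :: "pt set \<Rightarrow> pt set" where "VE E = (SOME V. V \<in> T \<and> ea E \<in> V \<and> eb E \<in> V)"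

lemma VE: "E \<in> IE \<Longrightarrow> VE E \<in> T \<and> ea E \<in> VE E \<and> eb E \<in> VE E"
  unfolding VE_def using edge_props by (metis (mono_tags, lifting) someI_ex)

lemma VE_hull: "E \<in> IE \<Longrightarrow> ea E \<in> convex hull (VE E) \<and> eb E \<in> convex hull (VE E)"
  using VE by (auto intro: hull_inc)

lemma el_pos: "E \<in> IE \<Longrightarrow> dist (ea E) (eb E) > 0" using edge_props by simp

lemma el_le_h: "E \<in> IE \<Longrightarrow> dist (ea E) (eb E) \<le> mesh_size T"
proof -
  assume E: "E \<in> IE"
  have "dist (ea E) (eb E) \<le> diameter (convex hull (VE E))" using diam_bound VE VE_hull E by blast
  also have "\<dots> \<le> mesh_size T" unfolding mesh_size_def using finT VE E by (intro Max_ge) auto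
  finally show ?thesis .
qed

lemma dlt_sq_bound:
  assumes f: "f \<in> P1_space T" and E: "E \<in> IE"
  shows "(dlt f E)\<^sup>2 \<le> (16 * \<sigma>\<^sup>2 / kappa) * ((norm (grad f (VE E)))\<^sup>2 * measure lborel (interior (convex hull (VE E))))"
proof -
  define V where "V = VE E"
  define g where "g = grad f V"
  define h where "h = diameter (convex hull V)"
  have V: "V \<in> T" using VE E V_def by blast
  have dl: "dlt f E = g \<bullet> (eb E - ea E)" unfolding dlt_def g_def V_def
    using grad_diff[OF f] VE VE_hull E by blast
  have "\<bar>dlt f E\<bar> \<le> norm g * norm (eb E - ea E)" unfolding dl by (rule Cauchy_Schwarz_ineq2)
  also have "\<dots> \<le> norm g * h" unfolding h_def V_def
    using diam_bound VE VE_hull E by (intro mult_left_mono) (auto simp: dist_norm norm_minus_commute)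
  finally have d1: "\<bar>dlt f E\<bar> \<le> norm g * h" .
  obtain x r where r: "r > 0" "cball x r \<subseteq> convex hull V" "h < 4 * \<sigma> * r" using inball[OF V] h_def by blast
  have h0: "h \<ge> 0" unfolding h_def using diam_pos[OF V] by simp
  have "ball x r \<subseteq> interior (convex hull V)" using r by (meson ball_subset_cball interior_maximal open_ball order_trans)
  hence "measure lborel (ball x r) \<le> measure lborel (interior (convex hull V))"
  proof (rule measure_mono_fmeasurable)
    show "ball x r \<in> sets lborel" by simp
    show "interior (convex hull V) \<in> fmeasurable lborel"
      unfolding fmeasurable_def using emeasure_bounded_finite[OF bounded_interior[OF K_bounded[OF V]]] by simp
  qed
  hence mb: "r\<^sup>2 * kappa \<le> measure lborel (interior (convex hull V))" using content_ball2 r by simp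
  have "h\<^sup>2 \<le> (4 * \<sigma> * r)\<^sup>2" using r h0 by (intro power_mono) auto
  also have "\<dots> = 16 * \<sigma>\<^sup>2 / kappa * (r\<^sup>2 * kappa)" using kappa_pos by (simp add: field_simps power2_eq_square)
  also have "\<dots> \<le> 16 * \<sigma>\<^sup>2 / kappa * measure lborel (interior (convex hull V))"
    using mb kappa_pos by (intro mult_left_mono) auto
  finally have hb: "h\<^sup>2 \<le> 16 * \<sigma>\<^sup>2 / kappa * measure lborel (interior (convex hull V))" .
  have "(dlt f E)\<^sup>2 \<le> (norm g * h)\<^sup>2" using d1 by (metis abs_ge_zero power2_abs power_mono)
  also have "\<dots> = (norm g)\<^sup>2 * h\<^sup>2" by (simp add: power_mult_distrib)
  also have "\<dots> \<le> (norm g)\<^sup>2 * (16 * \<sigma>\<^sup>2 / kappa * measure lborel (interior (convex hull V)))"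
    using hb by (intro mult_left_mono) auto
  finally show ?thesis unfolding g_def V_def by (simp add: ac_simps)
qed

definition Aconst :: real where "Aconst = 8 * (16 * \<sigma>\<^sup>2 / kappa)"

lemma Q_bound:
  assumes f: "f \<in> P1_space T"
  shows "(\<Sum>E\<in>IE. (dlt f E)\<^sup>2) \<le> Aconst * (H1_seminorm \<Omega> f)\<^sup>2"
proof -
  define \<Phi> where "\<Phi> V = (16 * \<sigma>\<^sup>2 / kappa) * ((norm (grad f V))\<^sup>2 * measure lborel (interior (convex hull V)))" for V
  have "(\<Sum>E\<in>IE. (dlt f E)\<^sup>2) \<le> (\<Sum>E\<in>IE. \<Phi> (VE E))"
    unfolding \<Phi>_def by (intro sum_mono dlt_sq_bound[OF f])
  also have "\<dots> \<le> 8 * (\<Sum>V\<in>T. \<Phi> V)"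
  proof (rule fiber_sum_le[OF finIE finT])
    show "VE ` IE \<subseteq> T" using VE by blast
    show "\<Phi> V \<ge> 0" for V unfolding \<Phi>_def using kappa_pos by (intro mult_nonneg_nonneg) auto
    fix V assume V: "V \<in> T"
    have "{E \<in> IE. VE E = V} \<subseteq> Pow V"
    proof
      fix E assume "E \<in> {E \<in> IE. VE E = V}"
      hence E: "E \<in> IE" "VE E = V" by auto
      have "E = {ea E, eb E}" using edge_props[OF E(1)] by blast
      moreover have "ea E \<in> V" "eb E \<in> V" using VE[OF E(1)] E(2) by auto
      ultimately show "E \<in> Pow V" by (metis Pow_iff empty_subsetI insert_subset)
    qed
    hence "card {E \<in> IE. VE E = V} \<le> card (Pow V)" using finV[OF V] by (intro card_mono) auto
    also have "\<dots> = 8" using card3[OF V] finV[OF V] by (simp add: card_Pow)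
    finally show "real (card {E \<in> IE. VE E = V}) \<le> 8" by simp
  qed
  also have "\<dots> = Aconst * (\<Sum>V\<in>T. (norm (grad f V))\<^sup>2 * measure lborel (interior (convex hull V)))"
    unfolding \<Phi>_def Aconst_def by (simp add: sum_distrib_left mult.assoc)
  also have "\<dots> = Aconst * (H1_seminorm \<Omega> f)\<^sup>2" using H1_formula[OF f] by simp
  finally show ?thesis .
qed

lemma Aconst_nonneg: "Aconst \<ge> 0" unfolding Aconst_def using kappa_pos by simp

lemma tangent_eq: "edge_tangent E = (1 / norm (eb E - ea E)) *\<^sub>R (eb E - ea E)"
  unfolding edge_tangent_def ea_def eb_def by (simp add: case_prod_unfold Let_def)

lemma tderiv_edge:
  assumes f: "f \<in> P1_space T" and E: "E \<in> IE" and s: "0 < s" "s < 1"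
  shows "tderiv f (edge_tangent E) (ea E + s *\<^sub>R (eb E - ea E)) = dlt f E / dist (ea E) (eb E)"
proof -
  define a where "a = ea E"
  define b where "b = eb E"
  define L where "L = norm (b - a)"
  define t where "t = (1 / L) *\<^sub>R (b - a)"
  define V where "V = VE E"
  define g where "g = grad f V"
  define x where "x = a + s *\<^sub>R (b - a)"
  have "ea E \<noteq> eb E" using edge_props[OF E] by blast
  hence Lp: "L > 0" unfolding L_def a_def b_def by simp
  have V: "V \<in> T" using VE E V_def by blast
  obtain c where c: "\<forall>y\<in>convex hull V. f y = c + g \<bullet> y" using grad_rep[OF f V] g_def by blast
  have seg: "closed_segment a b \<subseteq> convex hull V" unfolding a_def b_def V_def
    using VE[OF E] by (simp add: segment_convex_hull hull_mono)
  define \<delta> where "\<delta> = min s (1 - s) * L"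
  have dp: "\<delta> > 0" unfolding \<delta>_def using s Lp by simp
  have eqn: "f (x + \<tau> *\<^sub>R t) = (c + g \<bullet> x) + \<tau> * (g \<bullet> t)" if "\<tau> \<in> ball 0 \<delta>" for \<tau>
  proof -
    define u where "u = s + \<tau> / L"
    have "\<bar>\<tau>\<bar> < \<delta>" using that by (simp add: dist_norm)
    have "\<bar>\<tau> / L\<bar> = \<bar>\<tau>\<bar> / L" using Lp by simp
    also have "\<dots> < \<delta> / L" using \<open>\<bar>\<tau>\<bar> < \<delta>\<close> Lp by (rule divide_strict_right_mono)
    also have "\<delta> / L = min s (1 - s)" unfolding \<delta>_def using Lp by simp
    finally have "\<bar>\<tau> / L\<bar> < min s (1 - s)" .
    hence m1: "\<bar>\<tau> / L\<bar> < s" and m2: "\<bar>\<tau> / L\<bar> < 1 - s" by (metis min_less_iff_conj)+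
    have "\<tau> / L \<le> \<bar>\<tau> / L\<bar>" "- (\<tau> / L) \<le> \<bar>\<tau> / L\<bar>" by (rule abs_ge_self, rule abs_ge_minus_self)
    hence u01: "0 \<le> u" "u \<le> 1" unfolding u_def using m1 m2 by linarith+
    have xt: "x + \<tau> *\<^sub>R t = (1 - u) *\<^sub>R a + u *\<^sub>R b"
    proof -
      have "x + \<tau> *\<^sub>R t = a + s *\<^sub>R (b - a) + (\<tau> / L) *\<^sub>R (b - a)" unfolding x_def t_def by simp
      also have "\<dots> = a + u *\<^sub>R (b - a)" unfolding u_def by (simp add: scaleR_add_left)
      also have "\<dots> = (1 - u) *\<^sub>R a + u *\<^sub>R b" by (simp add: scaleR_diff_left scaleR_diff_right)
      finally show ?thesis .
    qed
    have "x + \<tau> *\<^sub>R t \<in> closed_segment a b" unfolding xt closed_segment_def using u01 by blast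
    hence "f (x + \<tau> *\<^sub>R t) = c + g \<bullet> (x + \<tau> *\<^sub>R t)" using c seg by blast
    thus ?thesis by (simp add: inner_add_right)
  qed
  have "((\<lambda>\<tau>. (c + g \<bullet> x) + \<tau> * (g \<bullet> t)) has_real_derivative (g \<bullet> t)) (at 0)"
    by (auto intro!: derivative_eq_intros)
  hence "((\<lambda>\<tau>. (c + g \<bullet> x) + \<tau> * (g \<bullet> t)) has_vector_derivative (g \<bullet> t)) (at 0)"
    by (simp add: has_real_derivative_iff_has_vector_derivative)
  hence "((\<lambda>\<tau>. f (x + \<tau> *\<^sub>R t)) has_vector_derivative (g \<bullet> t)) (at 0)"
    by (rule has_vector_derivative_transform_within_open[where S="ball 0 \<delta>"]) (use dp eqn in \<open>auto simp: dist_norm\<close>)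
  hence td: "tderiv f t x = g \<bullet> t" unfolding tderiv_def by (rule vector_derivative_at)
  have "g \<bullet> t = (g \<bullet> (b - a)) / L" unfolding t_def by simp
  also have "g \<bullet> (b - a) = dlt f E" unfolding dlt_def g_def V_def a_def b_def
    using grad_diff[OF f] VE VE_hull E by metis
  finally show ?thesis using td unfolding t_def L_def x_def a_def b_def tangent_eq
    by (simp add: dist_norm norm_minus_commute)
qed

lemma edge_int:
  assumes u: "u \<in> P1_space T" and v: "v \<in> P1_space T" and E: "E \<in> IE"
  shows "edge_integral E (\<lambda>x. tderiv u (edge_tangent E) x * tderiv v (edge_tangent E) x)
     = dlt u E * dlt v E / dist (ea E) (eb E)"
proof -
  define L where "L = dist (ea E) (eb E)"
  have Lp: "L > 0" unfolding L_def using el_pos[OF E] .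
  define k where "k = (dlt u E / L) * (dlt v E / L)"
  have "integral {0..1} (\<lambda>s. tderiv u (edge_tangent E) (ea E + s *\<^sub>R (eb E - ea E)) * tderiv v (edge_tangent E) (ea E + s *\<^sub>R (eb E - ea E)))
      = integral {0..1} (\<lambda>s::real. k)"
  proof (rule integral_spike[of "{0, 1}"])
    show "negligible {0::real, 1}" by simp
    fix s :: real assume "s \<in> {0..1} - {0, 1}"
    hence "0 < s" "s < 1" by auto
    thus "k = tderiv u (edge_tangent E) (ea E + s *\<^sub>R (eb E - ea E)) * tderiv v (edge_tangent E) (ea E + s *\<^sub>R (eb E - ea E))"
      unfolding k_def L_def using tderiv_edge[OF u E] tderiv_edge[OF v E] by simp
  qed
  also have "\<dots> = k" by simp
  finally have I: "integral {0..1} (\<lambda>s. tderiv u (edge_tangent E) (ea E + s *\<^sub>R (eb E - ea E)) * tderiv v (edge_tangent E) (ea E + s *\<^sub>R (eb E - ea E))) = k" .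
  have "edge_integral E (\<lambda>x. tderiv u (edge_tangent E) x * tderiv v (edge_tangent E) x)
     = L * integral {0..1} (\<lambda>s. tderiv u (edge_tangent E) (ea E + s *\<^sub>R (eb E - ea E)) * tderiv v (edge_tangent E) (ea E + s *\<^sub>R (eb E - ea E)))"
    unfolding edge_integral_def L_def ea_def eb_def by (simp add: case_prod_unfold Let_def)
  also have "\<dots> = L * k" using I by simp
  also have "\<dots> = dlt u E * dlt v E / L" unfolding k_def using Lp by (simp add: field_simps power2_eq_square)
  finally show ?thesis unfolding L_def .
qed

lemma xi_bounds: "0 \<le> xi_node \<Omega> T w x \<and> xi_node \<Omega> T w x \<le> 1"
proof -
  define S where "S = neighbours \<Omega> T x"
  define den where "den = (\<Sum>y\<in>S. \<bar>w x - w y\<bar>)"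
  have "\<bar>\<Sum>y\<in>S. (w x - w y)\<bar> \<le> den" unfolding den_def by (rule sum_abs)
  moreover have "den \<ge> 0" unfolding den_def by (simp add: sum_nonneg)
  ultimately show ?thesis unfolding xi_node_def S_def[symmetric] den_def[symmetric] Let_def
    by (auto simp: divide_le_eq_1)
qed

lemma alpha_eq: "alpha_edge \<Omega> T p w E = (max (xi_node \<Omega> T w (ea E)) (xi_node \<Omega> T w (eb E))) powr p"
  if "p \<ge> 1" for p
proof -
  have "alpha_edge \<Omega> T p w E = Sup ((\<lambda>s. ((1 - s) * xi_node \<Omega> T w (ea E) + s * xi_node \<Omega> T w (eb E)) powr p) ` {0..1})"
    unfolding alpha_edge_def ea_def eb_def by (simp add: case_prod_unfold Let_def)
  also have "\<dots> = (max (xi_node \<Omega> T w (ea E)) (xi_node \<Omega> T w (eb E))) powr p" using xi_bounds that by (intro sup_interp) auto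
  finally show ?thesis .
qed

lemma dh_formula:
  assumes u: "u \<in> P1_space T" and v: "v \<in> P1_space T"
  shows "d_h \<Omega> T p \<gamma> w u v = (\<Sum>E\<in>IE. \<gamma> * dist (ea E) (eb E) * alpha_edge \<Omega> T p w E * (dlt u E * dlt v E))"
  unfolding d_h_def
proof (intro sum.cong refl)
  fix E assume E: "E \<in> IE"
  have el: "edge_length E = dist (ea E) (eb E)" unfolding edge_length_def ea_def eb_def ..
  have Lp: "dist (ea E) (eb E) > 0" using el_pos[OF E] .
  show "\<gamma> * (edge_length E)\<^sup>2 * alpha_edge \<Omega> T p w E *
        edge_integral E (\<lambda>x. tderiv u (edge_tangent E) x * tderiv v (edge_tangent E) x) =
        \<gamma> * dist (ea E) (eb E) * alpha_edge \<Omega> T p w E * (dlt u E * dlt v E)"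
    unfolding edge_int[OF u v E] el using Lp by (simp add: field_simps power2_eq_square)
qed

end



lemma H1_nonneg: "H1_seminorm \<Omega> f \<ge> 0"
proof -
  define F where "F x = (onorm (frechet_derivative f (at x)))\<^sup>2" for x
  have "integral \<Omega> F \<ge> 0"
  proof (cases "F integrable_on \<Omega>")
    case True thus ?thesis by (rule integral_nonneg) (simp add: F_def)
  next
    case False thus ?thesis by (simp add: not_integrable_integral)
  qed
  thus ?thesis unfolding H1_seminorm_def F_def by simp
qed

context mesh begin

abbreviation "S c \<equiv> neighbours \<Omega> T c"

definition Nb :: "(pt \<Rightarrow> real) \<Rightarrow> pt \<Rightarrow> real" where
  "Nb u c = (\<Sum>j\<in>S c. \<bar>u c - u j\<bar>)"

lemma fin_nb: "finite (S c)"
proof (rule finite_subset)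
  show "S c \<subseteq> \<Union>T" unfolding neighbours_def mesh_nodes_def by blast
  show "finite (\<Union>T)" using finT finV by auto
qed

lemma nb_sub: "S c \<subseteq> \<Union>{V\<in>T. c \<in> V}"
proof
  fix j assume "j \<in> S c"
  hence "{c, j} \<in> IE" unfolding neighbours_def by blast
  then obtain a b V where "{c, j} = {a, b}" "V \<in> T" "a \<in> V" "b \<in> V" unfolding interior_edges_def by blast
  hence "c \<in> V" "j \<in> V" by (auto simp: doubleton_eq_iff)
  thus "j \<in> \<Union>{V\<in>T. c \<in> V}" using \<open>V \<in> T\<close> by blast
qed

lemma nb_card: "real (card (S c)) \<le> 48 * \<sigma>\<^sup>2"
proof -
  have "card (S c) \<le> card (\<Union>{V\<in>T. c \<in> V})"
    using nb_sub finT finV by (intro card_mono) auto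
  also have "\<dots> \<le> sum card {V\<in>T. c \<in> V}" by (rule card_Union_le_sum_card)
  also have "\<dots> = sum (\<lambda>V. 3) {V\<in>T. c \<in> V}" using card3 by (intro sum.cong) auto
  also have "\<dots> = 3 * card {V\<in>T. c \<in> V}" by simp
  finally have "real (card (S c)) \<le> 3 * real (card {V\<in>T. c \<in> V})" by linarith
  also have "\<dots> \<le> 3 * (16 * \<sigma>\<^sup>2)" using valence_tri by simp
  finally show ?thesis by simp
qed

lemma edges_at_card: "real (card {E\<in>IE. c \<in> E}) \<le> 48 * \<sigma>\<^sup>2"
proof -
  have "{E\<in>IE. c \<in> E} \<subseteq> (\<lambda>j. {c, j}) ` S c"
  proof
    fix E assume "E \<in> {E\<in>IE. c \<in> E}"
    hence E: "E \<in> IE" "c \<in> E" by auto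
    have ep: "ea E \<noteq> eb E" "E = {ea E, eb E}" "\<exists>V\<in>T. ea E \<in> V \<and> eb E \<in> V" using edge_props[OF E(1)] by auto
    show "E \<in> (\<lambda>j. {c, j}) ` S c"
    proof (cases "c = ea E")
      case True
      have "eb E \<in> S c" unfolding neighbours_def mesh_nodes_def using ep True E(1) by auto
      moreover have "E = {c, eb E}" using ep True by simp
      ultimately show ?thesis by blast
    next
      case False
      hence cb: "c = eb E" using ep E(2) by auto
      have "{c, ea E} = E" using ep cb by auto
      hence "ea E \<in> S c" unfolding neighbours_def mesh_nodes_def using ep cb E(1) by auto
      moreover have "E = {c, ea E}" using ep cb by auto
      ultimately show ?thesis by blast
    qed
  qed
  hence "card {E\<in>IE. c \<in> E} \<le> card ((\<lambda>j. {c, j}) ` S c)" by (intro card_mono) (auto simp: fin_nb)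
  also have "\<dots> \<le> card (S c)" by (rule card_image_le[OF fin_nb])
  finally show ?thesis using nb_card[of c] by linarith
qed

lemma other_nb: "E \<in> IE \<Longrightarrow> eb E \<in> S (ea E) \<and> ea E \<in> S (eb E)"
proof -
  assume E: "E \<in> IE"
  have ep: "ea E \<noteq> eb E" "E = {ea E, eb E}" "\<exists>V\<in>T. ea E \<in> V \<and> eb E \<in> V" using edge_props[OF E] by auto
  have "{eb E, ea E} \<in> IE" using ep E by (metis insert_commute)
  thus ?thesis unfolding neighbours_def mesh_nodes_def using ep E by auto
qed

lemma xi_lip:
  "\<bar>xi_node \<Omega> T v c - xi_node \<Omega> T w c\<bar> * (\<Sum>j\<in>S c. \<bar>w c - w j\<bar>) \<le> 2 * Nb (\<lambda>x. v x - w x) c"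
proof -
  have "\<bar>xi_node \<Omega> T v c - xi_node \<Omega> T w c\<bar> * (\<Sum>j\<in>S c. \<bar>w c - w j\<bar>)
      \<le> 2 * (\<Sum>j\<in>S c. \<bar>(v c - v j) - (w c - w j)\<bar>)"
    unfolding xi_node_def Let_def by (rule ratio_lip[OF fin_nb])
  also have "(\<Sum>j\<in>S c. \<bar>(v c - v j) - (w c - w j)\<bar>) = Nb (\<lambda>x. v x - w x) c"
    unfolding Nb_def by (intro sum.cong) (auto simp: algebra_simps)
  finally show ?thesis .
qed

lemma alpha_bounds: "p \<ge> 1 \<Longrightarrow> 0 \<le> alpha_edge \<Omega> T p w E \<and> alpha_edge \<Omega> T p w E \<le> 1"
proof -
  assume p: "p \<ge> 1"
  define m where "m = max (xi_node \<Omega> T w (ea E)) (xi_node \<Omega> T w (eb E))"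
  have m: "0 \<le> m" "m \<le> 1" unfolding m_def using xi_bounds[of w "ea E"] xi_bounds[of w "eb E"] by auto
  have "m powr p \<le> 1" using m p by (intro powr_le1) auto
  thus ?thesis using alpha_eq[OF p, of w E] m_def by simp
qed

lemma edge_main:
  assumes p: "p \<ge> 1" and E: "E \<in> IE"
  shows "\<bar>alpha_edge \<Omega> T p v E * dlt v E - alpha_edge \<Omega> T p w E * dlt w E\<bar>
     \<le> \<bar>dlt (\<lambda>x. v x - w x) E\<bar> + 2 * p * (Nb (\<lambda>x. v x - w x) (ea E) + Nb (\<lambda>x. v x - w x) (eb E))"
proof -
  define u where "u = (\<lambda>x. v x - w x)"
  define av where "av = alpha_edge \<Omega> T p v E"
  define aw where "aw = alpha_edge \<Omega> T p w E"
  define a where "a = ea E"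
  define b where "b = eb E"
  define da where "da = \<bar>xi_node \<Omega> T v a - xi_node \<Omega> T w a\<bar>"
  define db where "db = \<bar>xi_node \<Omega> T v b - xi_node \<Omega> T w b\<bar>"
  have du: "dlt u E = dlt v E - dlt w E" unfolding dlt_def u_def by simp
  have av01: "0 \<le> av" "av \<le> 1" unfolding av_def using alpha_bounds[OF p] by auto
  have alip: "\<bar>av - aw\<bar> \<le> p * (da + db)"
    unfolding av_def aw_def alpha_eq[OF p] da_def db_def a_def b_def
    using xi_bounds p by (intro max_powr_lip) auto
  have nb: "b \<in> S a" "a \<in> S b" using other_nb[OF E] a_def b_def by auto
  have wa: "\<bar>dlt w E\<bar> \<le> (\<Sum>j\<in>S a. \<bar>w a - w j\<bar>)"
  proof -
    have "\<bar>dlt w E\<bar> = \<bar>w a - w b\<bar>" unfolding dlt_def a_def b_def by simp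
    also have "\<dots> \<le> (\<Sum>j\<in>S a. \<bar>w a - w j\<bar>)" using nb fin_nb by (intro member_le_sum) auto
    finally show ?thesis .
  qed
  have wb: "\<bar>dlt w E\<bar> \<le> (\<Sum>j\<in>S b. \<bar>w b - w j\<bar>)"
  proof -
    have "\<bar>dlt w E\<bar> = \<bar>w b - w a\<bar>" unfolding dlt_def a_def b_def by simp
    also have "\<dots> \<le> (\<Sum>j\<in>S b. \<bar>w b - w j\<bar>)" using nb fin_nb by (intro member_le_sum) auto
    finally show ?thesis .
  qed
  have ta: "da * \<bar>dlt w E\<bar> \<le> 2 * Nb u a"
  proof -
    have "da * \<bar>dlt w E\<bar> \<le> da * (\<Sum>j\<in>S a. \<bar>w a - w j\<bar>)" using wa da_def by (intro mult_left_mono) auto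
    also have "\<dots> \<le> 2 * Nb u a" unfolding da_def u_def by (rule xi_lip)
    finally show ?thesis .
  qed
  have tb: "db * \<bar>dlt w E\<bar> \<le> 2 * Nb u b"
  proof -
    have "db * \<bar>dlt w E\<bar> \<le> db * (\<Sum>j\<in>S b. \<bar>w b - w j\<bar>)" using wb db_def by (intro mult_left_mono) auto
    also have "\<dots> \<le> 2 * Nb u b" unfolding db_def u_def by (rule xi_lip)
    finally show ?thesis .
  qed
  have "av * dlt v E - aw * dlt w E = av * dlt u E + (av - aw) * dlt w E" unfolding du by (simp add: algebra_simps)
  hence "\<bar>av * dlt v E - aw * dlt w E\<bar> \<le> \<bar>av * dlt u E\<bar> + \<bar>(av - aw) * dlt w E\<bar>" by simp
  also have "\<bar>av * dlt u E\<bar> \<le> \<bar>dlt u E\<bar>" using av01 by (simp add: abs_mult mult_left_le_one_le)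
  also have "\<bar>(av - aw) * dlt w E\<bar> \<le> p * (da + db) * \<bar>dlt w E\<bar>" unfolding abs_mult using alip by (intro mult_right_mono) auto
  also have "\<dots> = p * (da * \<bar>dlt w E\<bar> + db * \<bar>dlt w E\<bar>)" by (simp add: algebra_simps)
  also have "\<dots> \<le> p * (2 * Nb u a + 2 * Nb u b)" using ta tb p by (intro mult_left_mono) auto
  finally show ?thesis unfolding av_def aw_def u_def a_def b_def by (simp add: algebra_simps)
qed

lemma cross:
  assumes sel: "\<And>E. E \<in> IE \<Longrightarrow> e E \<in> E"
  shows "(\<Sum>E\<in>IE. \<bar>dlt z E\<bar> * Nb u (e E))
     \<le> 2 * (48 * \<sigma>\<^sup>2) * (sqrt (\<Sum>E\<in>IE. (dlt z E)\<^sup>2) * sqrt (\<Sum>E\<in>IE. (dlt u E)\<^sup>2))"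
proof -
  define M where "M = 48 * \<sigma>\<^sup>2"
  have M0: "M \<ge> 0" unfolding M_def by simp
  define P where "P = (SIGMA E:IE. S (e E))"
  have fP: "finite P" unfolding P_def using finIE fin_nb by auto
  define A where "A x = \<bar>dlt z (fst x)\<bar>" for x :: "pt set \<times> pt"
  define B where "B x = \<bar>u (e (fst x)) - u (snd x)\<bar>" for x :: "pt set \<times> pt"
  have s1: "(\<Sum>E\<in>IE. \<bar>dlt z E\<bar> * Nb u (e E)) = (\<Sum>x\<in>P. A x * B x)"
  proof -
    have "(\<Sum>E\<in>IE. \<bar>dlt z E\<bar> * Nb u (e E)) = (\<Sum>E\<in>IE. \<Sum>j\<in>S (e E). \<bar>dlt z E\<bar> * \<bar>u (e E) - u j\<bar>)"
      unfolding Nb_def by (simp add: sum_distrib_left)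
    also have "\<dots> = (\<Sum>x\<in>P. (\<lambda>E j. \<bar>dlt z E\<bar> * \<bar>u (e E) - u j\<bar>) (fst x) (snd x))"
      unfolding P_def using sum.Sigma[OF finIE, of "\<lambda>E. S (e E)" "\<lambda>E j. \<bar>dlt z E\<bar> * \<bar>u (e E) - u j\<bar>"] fin_nb
      by (simp add: case_prod_beta')
    finally show ?thesis unfolding A_def B_def by simp
  qed
  have s2: "(\<Sum>x\<in>P. A x * B x) \<le> sqrt (\<Sum>x\<in>P. (A x)\<^sup>2) * sqrt (\<Sum>x\<in>P. (B x)\<^sup>2)" by (rule cs_sqrt)
  have s3: "(\<Sum>x\<in>P. (A x)\<^sup>2) \<le> M * (\<Sum>E\<in>IE. (dlt z E)\<^sup>2)"
  proof -
    have "(\<Sum>x\<in>P. (A x)\<^sup>2) = (\<Sum>E\<in>IE. \<Sum>j\<in>S (e E). (dlt z E)\<^sup>2)"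
      unfolding P_def A_def using sum.Sigma[OF finIE, of "\<lambda>E. S (e E)" "\<lambda>E j. (dlt z E)\<^sup>2"] fin_nb
      by (simp add: case_prod_beta')
    also have "\<dots> = (\<Sum>E\<in>IE. real (card (S (e E))) * (dlt z E)\<^sup>2)" by simp
    also have "\<dots> \<le> (\<Sum>E\<in>IE. M * (dlt z E)\<^sup>2)"
      unfolding M_def using nb_card by (intro sum_mono mult_right_mono) auto
    finally show ?thesis by (simp add: sum_distrib_left)
  qed
  have s4: "(\<Sum>x\<in>P. (B x)\<^sup>2) \<le> (4 * M) * (\<Sum>E\<in>IE. (dlt u E)\<^sup>2)"
  proof -
    define f where "f x = {e (fst x), snd x}" for x :: "pt set \<times> pt"
    have fIE: "f x \<in> IE" if "x \<in> P" for x
      using that unfolding P_def f_def neighbours_def by auto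
    have BF: "(B x)\<^sup>2 = (dlt u (f x))\<^sup>2" if x: "x \<in> P" for x
    proof -
      have ep: "f x = {ea (f x), eb (f x)}" using edge_props[OF fIE[OF x]] by blast
      hence "(ea (f x) = e (fst x) \<and> eb (f x) = snd x) \<or> (ea (f x) = snd x \<and> eb (f x) = e (fst x))"
        unfolding f_def by (metis doubleton_eq_iff)
      moreover have "\<bar>u (e (fst x)) - u (snd x)\<bar>\<^sup>2 = (u (e (fst x)) - u (snd x))\<^sup>2" by simp
      moreover have "(u (e (fst x)) - u (snd x))\<^sup>2 = (u (snd x) - u (e (fst x)))\<^sup>2" by (rule power2_commute)
      ultimately show ?thesis unfolding B_def dlt_def by auto
    qed
    have "(\<Sum>x\<in>P. (B x)\<^sup>2) = (\<Sum>x\<in>P. (dlt u (f x))\<^sup>2)" using BF by (rule sum.cong[OF refl])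
    also have "\<dots> \<le> (4 * M) * (\<Sum>E\<in>IE. (dlt u E)\<^sup>2)"
    proof (rule fiber_sum_le[OF fP finIE])
      show "f ` P \<subseteq> IE" using fIE by blast
      show "0 \<le> (dlt u E')\<^sup>2" for E' by simp
      fix E' assume E': "E' \<in> IE"
      have E'e: "E' = {ea E', eb E'}" using edge_props[OF E'] by blast
      have cE': "card E' \<le> 2" by (subst E'e) (simp add: card_insert_le_m1)
      have finE': "finite E'" by (subst E'e) simp
      have sub1: "{x\<in>P. f x = E'} \<subseteq> {E\<in>IE. e E \<in> E'} \<times> E'"
        unfolding P_def f_def by auto
      have sub2: "{E\<in>IE. e E \<in> E'} \<subseteq> (\<Union>c\<in>E'. {E\<in>IE. c \<in> E})" using sel by auto
      have "real (card {E\<in>IE. e E \<in> E'}) \<le> real (card (\<Union>c\<in>E'. {E\<in>IE. c \<in> E}))"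
      proof (intro of_nat_mono card_mono sub2)
        show "finite (\<Union>c\<in>E'. {E\<in>IE. c \<in> E})" by (rule finite_subset[OF _ finIE]) blast
      qed
      also have "\<dots> \<le> real (\<Sum>c\<in>E'. card {E\<in>IE. c \<in> E})" by (intro of_nat_mono card_UN_le[OF finE'])
      also have "\<dots> = (\<Sum>c\<in>E'. real (card {E\<in>IE. c \<in> E}))" by simp
      also have "\<dots> \<le> (\<Sum>c\<in>E'. M)" unfolding M_def by (intro sum_mono edges_at_card)
      also have "\<dots> = real (card E') * M" by simp
      also have "\<dots> \<le> 2 * M" using cE' M0 by (intro mult_right_mono) auto
      finally have c1: "real (card {E\<in>IE. e E \<in> E'}) \<le> 2 * M" .
      have "card {x\<in>P. f x = E'} \<le> card ({E\<in>IE. e E \<in> E'} \<times> E')"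
        using sub1 finIE finE' by (intro card_mono) auto
      also have "\<dots> = card {E\<in>IE. e E \<in> E'} * card E'" by (rule card_cartesian_product)
      finally have "real (card {x\<in>P. f x = E'}) \<le> real (card {E\<in>IE. e E \<in> E'}) * real (card E')"
        by (simp only: of_nat_mult[symmetric] of_nat_le_iff)
      also have "\<dots> \<le> (2 * M) * 2" using c1 cE' M0 by (intro mult_mono) auto
      finally show "real (card {x\<in>P. f x = E'}) \<le> 4 * M" by simp
    qed
    finally show ?thesis .
  qed
  have "(\<Sum>E\<in>IE. \<bar>dlt z E\<bar> * Nb u (e E)) \<le> sqrt (\<Sum>x\<in>P. (A x)\<^sup>2) * sqrt (\<Sum>x\<in>P. (B x)\<^sup>2)"
    using s1 s2 by simp
  also have "\<dots> \<le> sqrt (M * (\<Sum>E\<in>IE. (dlt z E)\<^sup>2)) * sqrt ((4 * M) * (\<Sum>E\<in>IE. (dlt u E)\<^sup>2))"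
  proof (rule mult_mono)
    show "sqrt (\<Sum>x\<in>P. (A x)\<^sup>2) \<le> sqrt (M * (\<Sum>E\<in>IE. (dlt z E)\<^sup>2))" by (rule real_sqrt_le_mono[OF s3])
    show "sqrt (\<Sum>x\<in>P. (B x)\<^sup>2) \<le> sqrt ((4 * M) * (\<Sum>E\<in>IE. (dlt u E)\<^sup>2))" by (rule real_sqrt_le_mono[OF s4])
    have "0 \<le> M * (\<Sum>E\<in>IE. (dlt z E)\<^sup>2)" using M0 by (intro mult_nonneg_nonneg sum_nonneg) auto
    thus "0 \<le> sqrt (M * (\<Sum>E\<in>IE. (dlt z E)\<^sup>2))" by simp
    have "0 \<le> (\<Sum>x\<in>P. (B x)\<^sup>2)" by (intro sum_nonneg) auto
    thus "0 \<le> sqrt (\<Sum>x\<in>P. (B x)\<^sup>2)" by simp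
  qed
  also have "\<dots> = 2 * M * (sqrt (\<Sum>E\<in>IE. (dlt z E)\<^sup>2) * sqrt (\<Sum>E\<in>IE. (dlt u E)\<^sup>2))"
  proof -
    define X where "X = (\<Sum>E\<in>IE. (dlt z E)\<^sup>2)"
    define Y where "Y = (\<Sum>E\<in>IE. (dlt u E)\<^sup>2)"
    have 1: "sqrt (M * X) = sqrt M * sqrt X" by (rule real_sqrt_mult)
    have 2: "sqrt ((4 * M) * Y) = 2 * sqrt M * sqrt Y"
    proof -
      have "sqrt ((4 * M) * Y) = sqrt 4 * sqrt M * sqrt Y" by (simp only: real_sqrt_mult)
      moreover have "sqrt 4 = (2::real)" by (simp add: real_sqrt_eq_iff)
      ultimately show ?thesis by simp
    qed
    have "sqrt (M * (\<Sum>E\<in>IE. (dlt z E)\<^sup>2)) * sqrt ((4 * M) * (\<Sum>E\<in>IE. (dlt u E)\<^sup>2))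
        = (sqrt M * sqrt M) * 2 * (sqrt (\<Sum>E\<in>IE. (dlt z E)\<^sup>2) * sqrt (\<Sum>E\<in>IE. (dlt u E)\<^sup>2))"
      unfolding X_def[symmetric] Y_def[symmetric] 1 2 by (simp only: ac_simps)
    also have "sqrt M * sqrt M = M" using M0 by simp
    finally show ?thesis by simp
  qed
  finally show ?thesis unfolding M_def .
qed

lemma h_nonneg: "mesh_size T \<ge> 0"
proof -
  have "T \<noteq> {}" using ct unfolding conforming_triangulation_def by blast
  then obtain V where V: "V \<in> T" by blast
  have "diameter (convex hull V) \<le> mesh_size T" unfolding mesh_size_def using finT V by (intro Max_ge) auto
  thus ?thesis using diam_pos[OF V] by simp
qed

lemma sqrtQ:
  assumes f: "f \<in> P1_space T"
  shows "sqrt (\<Sum>E\<in>IE. (dlt f E)\<^sup>2) \<le> sqrt Aconst * H1_seminorm \<Omega> f"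
proof -
  have "sqrt (\<Sum>E\<in>IE. (dlt f E)\<^sup>2) \<le> sqrt (Aconst * (H1_seminorm \<Omega> f)\<^sup>2)"
    by (rule real_sqrt_le_mono[OF Q_bound[OF f]])
  also have "\<dots> = sqrt Aconst * H1_seminorm \<Omega> f"
    using H1_nonneg[of \<Omega> f] by (simp add: real_sqrt_mult)
  finally show ?thesis .
qed

lemma main_bound:
  assumes p: "p \<ge> 1" and v: "v \<in> P1_space T" and w: "w \<in> P1_space T" and z: "z \<in> P1_space T"
    and g: "\<gamma> > 0"
  shows "\<bar>d_h \<Omega> T p \<gamma> v v z - d_h \<Omega> T p \<gamma> w w z\<bar>
     \<le> ((1 + 8 * p * (48 * \<sigma>\<^sup>2)) * Aconst) * \<gamma> * mesh_size T * H1_seminorm \<Omega> (\<lambda>x. v x - w x) * H1_seminorm \<Omega> z"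
proof -
  define u where "u = (\<lambda>x. v x - w x)"
  have uP: "u \<in> P1_space T" unfolding u_def by (rule P1_diff[OF v w])
  define h where "h = mesh_size T"
  define M where "M = 48 * \<sigma>\<^sup>2"
  have M0: "M \<ge> 0" unfolding M_def by simp
  have h0: "h \<ge> 0" unfolding h_def by (rule h_nonneg)
  define L where "L E = dist (ea E) (eb E)" for E
  define D where "D E = alpha_edge \<Omega> T p v E * dlt v E - alpha_edge \<Omega> T p w E * dlt w E" for E
  define R where "R = sqrt (\<Sum>E\<in>IE. (dlt z E)\<^sup>2) * sqrt (\<Sum>E\<in>IE. (dlt u E)\<^sup>2)"
  have R0: "R \<ge> 0" unfolding R_def by (intro mult_nonneg_nonneg real_sqrt_ge_zero sum_nonneg) auto
  have diff: "d_h \<Omega> T p \<gamma> v v z - d_h \<Omega> T p \<gamma> w w z = (\<Sum>E\<in>IE. \<gamma> * L E * D E * dlt z E)"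
    unfolding dh_formula[OF v z] dh_formula[OF w z] L_def D_def
    by (simp add: sum_subtractf[symmetric] algebra_simps)
  have "\<bar>\<Sum>E\<in>IE. \<gamma> * L E * D E * dlt z E\<bar> \<le> (\<Sum>E\<in>IE. \<bar>\<gamma> * L E * D E * dlt z E\<bar>)" by (rule sum_abs)
  also have "\<dots> \<le> (\<Sum>E\<in>IE. \<gamma> * h * (\<bar>dlt z E\<bar> * \<bar>dlt u E\<bar> + 2 * p * (\<bar>dlt z E\<bar> * Nb u (ea E)) + 2 * p * (\<bar>dlt z E\<bar> * Nb u (eb E))))"
  proof (rule sum_mono)
    fix E assume E: "E \<in> IE"
    have L0: "0 \<le> L E" "L E \<le> h" unfolding L_def h_def using el_le_h[OF E] by auto
    have DE: "\<bar>D E\<bar> \<le> \<bar>dlt u E\<bar> + 2 * p * (Nb u (ea E) + Nb u (eb E))"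
      unfolding D_def u_def by (rule edge_main[OF p E])
    have "\<bar>\<gamma> * L E * D E * dlt z E\<bar> = \<gamma> * (L E * (\<bar>D E\<bar> * \<bar>dlt z E\<bar>))"
      using g L0 by (simp add: abs_mult)
    also have "\<dots> \<le> \<gamma> * (h * ((\<bar>dlt u E\<bar> + 2 * p * (Nb u (ea E) + Nb u (eb E))) * \<bar>dlt z E\<bar>))"
      using g L0 DE h0 by (intro mult_left_mono mult_mono mult_right_mono) auto
    also have "\<dots> = \<gamma> * h * (\<bar>dlt z E\<bar> * \<bar>dlt u E\<bar> + 2 * p * (\<bar>dlt z E\<bar> * Nb u (ea E)) + 2 * p * (\<bar>dlt z E\<bar> * Nb u (eb E)))"
      by (simp add: algebra_simps)
    finally show "\<bar>\<gamma> * L E * D E * dlt z E\<bar> \<le> \<dots>" .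
  qed
  also have "\<dots> = \<gamma> * h * ((\<Sum>E\<in>IE. \<bar>dlt z E\<bar> * \<bar>dlt u E\<bar>) + 2 * p * (\<Sum>E\<in>IE. \<bar>dlt z E\<bar> * Nb u (ea E)) + 2 * p * (\<Sum>E\<in>IE. \<bar>dlt z E\<bar> * Nb u (eb E)))"
  proof -
    have "(\<Sum>E\<in>IE. \<gamma> * h * (\<bar>dlt z E\<bar> * \<bar>dlt u E\<bar> + 2 * p * (\<bar>dlt z E\<bar> * Nb u (ea E)) + 2 * p * (\<bar>dlt z E\<bar> * Nb u (eb E))))
       = \<gamma> * h * (\<Sum>E\<in>IE. (\<bar>dlt z E\<bar> * \<bar>dlt u E\<bar> + 2 * p * (\<bar>dlt z E\<bar> * Nb u (ea E)) + 2 * p * (\<bar>dlt z E\<bar> * Nb u (eb E))))"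
      by (rule sum_distrib_left[symmetric])
    also have "(\<Sum>E\<in>IE. (\<bar>dlt z E\<bar> * \<bar>dlt u E\<bar> + 2 * p * (\<bar>dlt z E\<bar> * Nb u (ea E)) + 2 * p * (\<bar>dlt z E\<bar> * Nb u (eb E))))
       = (\<Sum>E\<in>IE. \<bar>dlt z E\<bar> * \<bar>dlt u E\<bar>) + 2 * p * (\<Sum>E\<in>IE. \<bar>dlt z E\<bar> * Nb u (ea E)) + 2 * p * (\<Sum>E\<in>IE. \<bar>dlt z E\<bar> * Nb u (eb E))"
      by (simp add: sum.distrib sum_distrib_left)
    finally show ?thesis .
  qed
  also have "\<dots> \<le> \<gamma> * h * (R + 2 * p * (2 * M * R) + 2 * p * (2 * M * R))"
  proof -
    have a1: "(\<Sum>E\<in>IE. \<bar>dlt z E\<bar> * \<bar>dlt u E\<bar>) \<le> R"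
      unfolding R_def using cs_sqrt[of "\<lambda>E. \<bar>dlt z E\<bar>" "\<lambda>E. \<bar>dlt u E\<bar>" IE] by simp
    have a2: "(\<Sum>E\<in>IE. \<bar>dlt z E\<bar> * Nb u (ea E)) \<le> 2 * M * R"
      unfolding R_def M_def by (rule cross) (use edge_props in blast)
    have a3: "(\<Sum>E\<in>IE. \<bar>dlt z E\<bar> * Nb u (eb E)) \<le> 2 * M * R"
      unfolding R_def M_def by (rule cross) (use edge_props in blast)
    have "(\<Sum>E\<in>IE. \<bar>dlt z E\<bar> * \<bar>dlt u E\<bar>) + 2 * p * (\<Sum>E\<in>IE. \<bar>dlt z E\<bar> * Nb u (ea E)) + 2 * p * (\<Sum>E\<in>IE. \<bar>dlt z E\<bar> * Nb u (eb E))
        \<le> R + 2 * p * (2 * M * R) + 2 * p * (2 * M * R)"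
      using a1 a2 a3 p by (intro add_mono mult_left_mono) auto
    thus ?thesis using g h0 by (intro mult_left_mono) auto
  qed
  also have "\<dots> = (1 + 8 * p * M) * \<gamma> * h * R" by (simp add: algebra_simps)
  also have "\<dots> \<le> (1 + 8 * p * M) * \<gamma> * h * (Aconst * H1_seminorm \<Omega> z * H1_seminorm \<Omega> u)"
  proof -
    have "R \<le> (sqrt Aconst * H1_seminorm \<Omega> z) * (sqrt Aconst * H1_seminorm \<Omega> u)"
      unfolding R_def using sqrtQ[OF z] sqrtQ[OF uP]
      using H1_nonneg[of \<Omega> z] Aconst_nonneg by (intro mult_mono) (auto intro!: sum_nonneg mult_nonneg_nonneg)
    also have "\<dots> = Aconst * H1_seminorm \<Omega> z * H1_seminorm \<Omega> u"
      using Aconst_nonneg by (simp add: algebra_simps)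
    finally have "R \<le> Aconst * H1_seminorm \<Omega> z * H1_seminorm \<Omega> u" .
    moreover have "0 \<le> (1 + 8 * p * M) * \<gamma> * h" using p M0 g h0 by simp
    ultimately show ?thesis by (simp add: mult_left_mono)
  qed
  finally show ?thesis unfolding diff h_def M_def u_def by (simp add: algebra_simps)
qed

end


theorem lemma2p2:
  fixes \<sigma> p :: real
  assumes "p \<ge> 1"
  shows "\<exists>C>0. \<forall>(\<Omega>::pt set) T \<gamma>\<^sub>0 v w z.
     open \<Omega> \<and> bounded \<Omega> \<and> connected \<Omega> \<and> lipschitz_boundary \<Omega> \<and>
     conforming_triangulation \<Omega> T \<and> shape_regular \<sigma> T \<and> \<gamma>\<^sub>0 > 0 \<and>
     v \<in> P1_space T \<and> w \<in> P1_space T \<and> z \<in> P1_space T \<longrightarrow>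
     \<bar>d_h \<Omega> T p \<gamma>\<^sub>0 v v z - d_h \<Omega> T p \<gamma>\<^sub>0 w w z\<bar>
       \<le> C * \<gamma>\<^sub>0 * mesh_size T * H1_seminorm \<Omega> (\<lambda>x. v x - w x) * H1_seminorm \<Omega> z"
proof -
  define C0 where "C0 = (1 + 8 * p * (48 * \<sigma>\<^sup>2)) * (8 * (16 * \<sigma>\<^sup>2 / measure lborel (ball (0::pt) 1)))"
  have kp: "measure lborel (ball (0::pt) 1) > 0" by (rule content_ball_pos) simp
  have C00: "C0 \<ge> 0" unfolding C0_def using kp assms by (intro mult_nonneg_nonneg) auto
  show ?thesis
  proof (intro exI[of _ "C0 + 1"] conjI allI impI)
    show "C0 + 1 > 0" using C00 by simp
    fix \<Omega> :: "pt set" and T :: "pt set set" and \<gamma> :: real and v w z :: "pt \<Rightarrow> real"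
    assume H: "open \<Omega> \<and> bounded \<Omega> \<and> connected \<Omega> \<and> lipschitz_boundary \<Omega> \<and>
     conforming_triangulation \<Omega> T \<and> shape_regular \<sigma> T \<and> \<gamma> > 0 \<and>
     v \<in> P1_space T \<and> w \<in> P1_space T \<and> z \<in> P1_space T"
    interpret mesh \<Omega> T \<sigma> using H by unfold_locales auto
    have g: "\<gamma> > 0" using H by blast
    have "\<bar>d_h \<Omega> T p \<gamma> v v z - d_h \<Omega> T p \<gamma> w w z\<bar>
       \<le> ((1 + 8 * p * (48 * \<sigma>\<^sup>2)) * Aconst) * \<gamma> * mesh_size T * H1_seminorm \<Omega> (\<lambda>x. v x - w x) * H1_seminorm \<Omega> z"
      using H by (intro main_bound assms) auto
    also have "((1 + 8 * p * (48 * \<sigma>\<^sup>2)) * Aconst) = C0"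
      unfolding C0_def Aconst_def kappa_def ..
    also have "C0 * \<gamma> * mesh_size T * H1_seminorm \<Omega> (\<lambda>x. v x - w x) * H1_seminorm \<Omega> z
        \<le> (C0 + 1) * \<gamma> * mesh_size T * H1_seminorm \<Omega> (\<lambda>x. v x - w x) * H1_seminorm \<Omega> z"
    proof -
      have "0 \<le> \<gamma> * mesh_size T * H1_seminorm \<Omega> (\<lambda>x. v x - w x) * H1_seminorm \<Omega> z"
        using g h_nonneg H1_nonneg by (intro mult_nonneg_nonneg) auto
      hence "C0 * (\<gamma> * mesh_size T * H1_seminorm \<Omega> (\<lambda>x. v x - w x) * H1_seminorm \<Omega> z)
          \<le> (C0 + 1) * (\<gamma> * mesh_size T * H1_seminorm \<Omega> (\<lambda>x. v x - w x) * H1_seminorm \<Omega> z)"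
        by (intro mult_right_mono) auto
      thus ?thesis by (simp add: mult.assoc)
    qed
    finally show "\<bar>d_h \<Omega> T p \<gamma> v v z - d_h \<Omega> T p \<gamma> w w z\<bar>
       \<le> (C0 + 1) * \<gamma> * mesh_size T * H1_seminorm \<Omega> (\<lambda>x. v x - w x) * H1_seminorm \<Omega> z" .
  qed
qed

end
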